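(* Let $n,m,q,L\ge1$, $c>0$, and let $X\in\mathbb{R}^{n\times L}$, $U\in\mathbb{R}^{m\times L}$, $V\in\mathbb{R}^{q\times L}$, $E\in\mathbb{R}^{n\times q}$, $\mathcal{D}_{11}\in\mathbb{R}^{L\times L}$ be given. Define $N_c=\begin{bmatrix}I_n & X\mathcal{D}_{11}-EV\\ 0&-X\\0&-U\end{bmatrix}\begin{bmatrix}cI_n&0\\0&-I_L\end{bmatrix}\begin{bmatrix}I_n & X\mathcal{D}_{11}-EV\\ 0&-X\\0&-U\end{bmatrix}^{T}$ and the set $\Sigma=\{(A,B)\in\mathbb{R}^{n\times n}\times\mathbb{R}^{n\times m}: \begin{bmatrix}I_n&A&B\end{bmatrix}N_c\begin{bmatrix}I_n&A&B\end{bmatrix}^{T}\ge0\}$ (equivalently, $W:=X\mathcal{D}_{11}-AX-BU-EV$ satisfies $WW^T\le cI_n$). Suppose the true system matrices $(\bar A,\bar B)$ satisfy $\begin{bmatrix}I_n&\bar A&\bar B\end{bmatrix}N_c\begin{bmatrix}I_n&\bar A&\bar B\end{bmatrix}^{T}>0$. Then the data $(X,U)$ are informative for quadratic stabilization if and only if there exist $\alpha\ge0$, $\beta>0$, $P=P^T>0$ in $\mathbb{R}^{n\times n}$ and $\mathcal{J}\in\mathbb{R}^{m\times n}$ such that $\begin{bmatrix}-\beta I_n&-P&-\mathcal{J}^{T}\\-P&0&0\\-\mathcal{J}&0&0\end{bmatrix}-\alpha N_c\ge0.$ Moreover, if $P,\mathcal{J}$ satisfy this inequality, then $K=\mathcal{J}P^{-1}$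 is a quadratically stabilizing gain, i.e. $(A+BK)^TP^{-1}+P^{-1}(A+BK)<0$ for all $(A,B)\in\Sigma$.
   Context: The data come from an agent $\dot x=\bar Ax+\bar Bu+Ev$ with unknown $(\bar A,\bar B)$: $X,U,V$ are the first $L$ coefficients of $x,u,v$ in a Chebyshev orthogonal polynomial basis, $\mathcal{D}_{11}$ is the leading $L\times L$ block of the basis differentiation matrix, and the truncation error enters as an unknown noise $W$ with $X\mathcal{D}_{11}=\bar AX+\bar BU+EV+W$ and $WW^T\le cI_n$, so $(\bar A,\bar B)\in\Sigma$. The data $(X,U)$ are informative for quadratic stabilization if there exist $K\in\mathbb{R}^{m\times n}$ and $Q=Q^T>0$ such that $(A+BK)^TQ+Q(A+BK)<0$ for all $(A,B)\in\Sigma$. Matrix inequalities refer to symmetric matrices in the Loewner order. *)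

theory Defs
  imports "HOL-Analysis.Analysis"
begin

definition hblock :: "real^'b^'a \<Rightarrow> real^'c^'a \<Rightarrow> real^('b + 'c)^'a" where
  "hblock M1 M2 = (\<chi> i j. case j of Inl b \<Rightarrow> M1 $ i $ b | Inr c \<Rightarrow> M2 $ i $ c)"

definition vblock :: "real^'c^'a \<Rightarrow> real^'c^'b \<Rightarrow> real^'c^('a + 'b)" where
  "vblock M1 M2 = (\<chi> i. case i of Inl a \<Rightarrow> M1 $ a | Inr b \<Rightarrow> M2 $ b)"

definition psd :: "real^'n^'n \<Rightarrow> bool" where
  "psd M \<longleftrightarrow> (\<forall>x. 0 \<le> x \<bullet> (M *v x))"

definition pd :: "real^'n^'n \<Rightarrow> bool" where
  "pd M \<longleftrightarrow> (\<forall>x. x \<noteq> 0 \<longrightarrow> 0 < x \<bullet> (M *v x))"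

definition nd :: "real^'n^'n \<Rightarrow> bool" where
  "nd M \<longleftrightarrow> pd (- M)"

definition Nc :: "real \<Rightarrow> real^'l^'n \<Rightarrow> real^'l^'m \<Rightarrow> real^'l^'q \<Rightarrow> real^'q^'n \<Rightarrow> real^'l^'l
    \<Rightarrow> real^('n + ('n + 'm))^('n + ('n + 'm))" where
  "Nc c X U V E D11 =
    (let F = vblock (hblock (mat 1) (X ** D11 - E ** V))
                    (vblock (hblock 0 (- X)) (hblock 0 (- U)));
         M = vblock (hblock (c *\<^sub>R (mat 1 :: real^'n^'n)) 0) (hblock 0 (- (mat 1 :: real^'l^'l)))
     in F ** M ** transpose F)"

definition rowIAB :: "real^'n^'n \<Rightarrow> real^'m^'n \<Rightarrow> real^('n + ('n + 'm))^'n" where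
  "rowIAB A B = hblock (mat 1) (hblock A B)"

definition Sigma_set :: "real \<Rightarrow> real^'l^'n \<Rightarrow> real^'l^'m \<Rightarrow> real^'l^'q \<Rightarrow> real^'q^'n \<Rightarrow> real^'l^'l
    \<Rightarrow> ((real^'n^'n) \<times> (real^'m^'n)) set" where
  "Sigma_set c X U V E D11 =
    {(A, B). psd (rowIAB A B ** Nc c X U V E D11 ** transpose (rowIAB A B))}"

definition informative_qs :: "((real^'n^'n) \<times> (real^'m^'n)) set \<Rightarrow> bool" where
  "informative_qs S \<longleftrightarrow>
    (\<exists>(K :: real^'n^'m) (Q :: real^'n^'n). transpose Q = Q \<and> pd Q \<and>
       (\<forall>(A, B) \<in> S. nd (transpose (A + B ** K) ** Q + Q ** (A + B ** K))))"

definition LMI :: "real \<Rightarrow> real \<Rightarrow> real^'n^'n \<Rightarrow> real^'n^'m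
    \<Rightarrow> real^('n + ('n + 'm))^('n + ('n + 'm)) \<Rightarrow> real^('n + ('n + 'm))^('n + ('n + 'm))" where
  "LMI \<alpha> \<beta> P J N =
     vblock (hblock (- (\<beta> *\<^sub>R mat 1)) (hblock (- P) (- transpose J)))
            (vblock (hblock (- P) (hblock 0 0))
                    (hblock (- J) (hblock 0 0)))
     - \<alpha> *\<^sub>R N"

end

theory Submission
  imports Defs
begin


definition pl :: "real^('a::finite+'b::finite) \<Rightarrow> real^'a" where "pl w = (\<chi> i. w $ Inl i)"
definition pr :: "real^('a::finite+'b::finite) \<Rightarrow> real^'b" where "pr w = (\<chi> i. w $ Inr i)"
definition vjoin :: "real^'a::finite \<Rightarrow> real^'b::finite \<Rightarrow> real^('a+'b)" where
  "vjoin a b = (\<chi> i. case i of Inl j \<Rightarrow> a $ j | Inr j \<Rightarrow> b $ j)"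

lemma pl_vjoin[simp]: "pl (vjoin a b) = a" by (simp add: pl_def vjoin_def)
lemma pr_vjoin[simp]: "pr (vjoin a b) = b" by (simp add: pr_def vjoin_def)
lemma vjoin_pl_pr: "vjoin (pl w) (pr w) = w"
  by (simp add: vec_eq_iff pl_def pr_def vjoin_def split: sum.split)
lemma vjoin_add[simp]: "vjoin a b + vjoin c d = vjoin (a + c) (b + d)"
  by (simp add: vec_eq_iff vjoin_def split: sum.split)
lemma vjoin_diff[simp]: "vjoin a b - vjoin c d = vjoin (a - c) (b - d)"
  by (simp add: vec_eq_iff vjoin_def split: sum.split)
lemma vjoin_scaleR[simp]: "r *\<^sub>R vjoin a b = vjoin (r *\<^sub>R a) (r *\<^sub>R b)"
  by (simp add: vec_eq_iff vjoin_def split: sum.split)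
lemma vjoin_uminus[simp]: "- vjoin a b = vjoin (- a) (- b)"
  by (simp add: vec_eq_iff vjoin_def split: sum.split)
lemma vjoin_zero[simp]: "vjoin 0 0 = 0"
  by (simp add: vec_eq_iff vjoin_def split: sum.split)
lemma vjoin_eq_iff[simp]: "vjoin a b = vjoin c d \<longleftrightarrow> a = c \<and> b = d"
  by (metis pl_vjoin pr_vjoin)
lemma pl_add[simp]: "pl (v + w) = pl v + pl w" by (simp add: pl_def vec_eq_iff)
lemma pr_add[simp]: "pr (v + w) = pr v + pr w" by (simp add: pr_def vec_eq_iff)
lemma pl_scaleR[simp]: "pl (r *\<^sub>R w) = r *\<^sub>R pl w" by (simp add: pl_def vec_eq_iff)
lemma pr_scaleR[simp]: "pr (r *\<^sub>R w) = r *\<^sub>R pr w" by (simp add: pr_def vec_eq_iff)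
lemma pl_diff[simp]: "pl (v - w) = pl v - pl w" by (simp add: pl_def vec_eq_iff)
lemma pr_diff[simp]: "pr (v - w) = pr v - pr w" by (simp add: pr_def vec_eq_iff)
lemma pl_zero[simp]: "pl 0 = 0" by (simp add: pl_def vec_eq_iff)
lemma pr_zero[simp]: "pr 0 = 0" by (simp add: pr_def vec_eq_iff)

lemma sum_Plus_UNIV: "(\<Sum>i\<in>(UNIV::('a::finite+'b::finite) set). f i) = (\<Sum>i\<in>UNIV. f (Inl i)) + (\<Sum>i\<in>UNIV. f (Inr i))"
proof -
  have "(\<Sum>i\<in>(UNIV::('a+'b) set). f i) = (\<Sum>i\<in>(UNIV <+> UNIV). f i)" by simp
  also have "\<dots> = (\<Sum>i\<in>UNIV. f (Inl i)) + (\<Sum>i\<in>UNIV. f (Inr i))"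
    by (subst sum.Plus) (auto simp: comp_def)
  finally show ?thesis .
qed

lemma inner_split: "(v::real^('a::finite+'b::finite)) \<bullet> w = pl v \<bullet> pl w + pr v \<bullet> pr w"
  by (simp add: inner_vec_def sum_Plus_UNIV pl_def pr_def)
lemma inner_vjoin[simp]: "vjoin a b \<bullet> vjoin c d = a \<bullet> c + b \<bullet> d"
  by (simp add: inner_split)

lemma vblock_mulv[simp]: "vblock M1 M2 *v x = vjoin (M1 *v x) (M2 *v x)"
  by (simp add: vec_eq_iff vblock_def vjoin_def matrix_vector_mult_def split: sum.split)
lemma hblock_mulv[simp]: "hblock M1 M2 *v w = M1 *v pl w + M2 *v pr w"
  by (simp add: vec_eq_iff hblock_def matrix_vector_mult_def sum_Plus_UNIV pl_def pr_def)
lemma hblock_mulv_vjoin[simp]: "hblock M1 M2 *v vjoin a b = M1 *v a + M2 *v b"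
  by simp
lemma vmul_vblock[simp]: "x v* vblock M1 M2 = pl x v* M1 + pr x v* M2"
  by (simp add: vec_eq_iff vblock_def vector_matrix_mult_def sum_Plus_UNIV pl_def pr_def)
lemma vmul_hblock[simp]: "x v* hblock M1 M2 = vjoin (x v* M1) (x v* M2)"
  by (simp add: vec_eq_iff hblock_def vjoin_def vector_matrix_mult_def split: sum.split)

lemma inner_mulv: "(x::real^'n) \<bullet> (M *v y) = (x v* M) \<bullet> y"
  by (simp add: dot_lmul_matrix)


lemma mulv_uminus[simp]: "(- M) *v (x::real^'n) = - (M *v x)"
  by (simp add: vec_eq_iff matrix_vector_mult_def sum_negf)
lemma vmul_uminus[simp]: "(x::real^'m) v* (- M) = - (x v* M)"
  by (simp add: vec_eq_iff vector_matrix_mult_def sum_negf)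
lemma mulv_scaleR[simp]: "(r *\<^sub>R M) *v (x::real^'n) = r *\<^sub>R (M *v x)"
  by (simp add: vec_eq_iff matrix_vector_mult_def sum_distrib_left mult.assoc)
lemma vmul_scaleR[simp]: "(x::real^'m) v* (r *\<^sub>R M) = r *\<^sub>R (x v* M)"
  by (simp add: vec_eq_iff vector_matrix_mult_def sum_distrib_left mult.left_commute)
lemma vmul_mmul: "(x::real^'m) v* (A ** B) = (x v* A) v* B"
  by (metis transpose_matrix_vector matrix_transpose_mul matrix_vector_mul_assoc)

definition RR :: "real^'l^'n \<Rightarrow> real^'l^'l \<Rightarrow> real^'q^'n \<Rightarrow> real^'l^'q \<Rightarrow> real^'l^'n" where
  "RR X D11 E V = X ** D11 - E ** V"

lemma Nc_form:
  fixes X :: "real^'l^'n" and U :: "real^'l^'m" and V :: "real^'l^'q"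
    and E :: "real^'q^'n" and D11 :: "real^'l^'l"
  shows "vjoin x (vjoin y z) \<bullet> (Nc c X U V E D11 *v vjoin x (vjoin y z))
    = c * (x \<bullet> x) - (norm (x v* RR X D11 E V - y v* X - z v* U))\<^sup>2"
proof -
  let ?w = "vjoin x (vjoin y z)"
  have "?w \<bullet> (Nc c X U V E D11 *v ?w) = (?w v* vblock (hblock (mat 1) (X ** D11 - E ** V))
                    (vblock (hblock 0 (- X)) (hblock 0 (- U)))) \<bullet>
     (vblock (hblock (c *\<^sub>R (mat 1 :: real^'n^'n)) 0) (hblock 0 (- (mat 1 :: real^'l^'l))) *v 
      (?w v* vblock (hblock (mat 1) (X ** D11 - E ** V))
                    (vblock (hblock 0 (- X)) (hblock 0 (- U)))))"
    unfolding Nc_def Let_def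
    by (simp only: matrix_vector_mul_assoc[symmetric] inner_mulv transpose_matrix_vector)
  also have "\<dots> = c * (x \<bullet> x) - (norm (x v* RR X D11 E V - y v* X - z v* U))\<^sup>2"
    by (simp add: RR_def power2_norm_eq_inner algebra_simps inner_commute)
  finally show ?thesis .
qed


lemma LMI_form:
  fixes P :: "real^'n^'n" and J :: "real^'n^'m" and N :: "real^('n+('n+'m))^('n+('n+'m))"
  assumes "transpose P = P"
  shows "vjoin x (vjoin y z) \<bullet> (LMI \<alpha> \<beta> P J N *v vjoin x (vjoin y z))
    = - \<beta> * (x \<bullet> x) - 2 * (y \<bullet> (P *v x)) - 2 * (z \<bullet> (J *v x))
      - \<alpha> * (vjoin x (vjoin y z) \<bullet> (N *v vjoin x (vjoin y z)))"
proof -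
  have P: "x v* P = P *v x" by (metis assms transpose_matrix_vector)
  have 1: "x \<bullet> (P *v y) = y \<bullet> (P *v x)" by (simp add: inner_mulv P inner_commute)
  have 2: "x \<bullet> (z v* J) = z \<bullet> (J *v x)" by (simp add: inner_mulv inner_commute)
  show ?thesis unfolding LMI_def
    by (simp add: matrix_vector_mult_diff_rdistrib inner_diff_right 1 2 algebra_simps inner_commute)
qed

lemma quad_rowIAB:
  fixes X :: "real^'l^'n" and U :: "real^'l^'m" and V :: "real^'l^'q"
    and E :: "real^'q^'n" and D11 :: "real^'l^'l" and A :: "real^'n^'n" and B :: "real^'m^'n"
  shows "u \<bullet> ((rowIAB A B ** Nc c X U V E D11 ** transpose (rowIAB A B)) *v u)
    = c * (u \<bullet> u) - (norm (u v* (RR X D11 E V - A ** X - B ** U)))\<^sup>2"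
proof -
  have "u \<bullet> ((rowIAB A B ** Nc c X U V E D11 ** transpose (rowIAB A B)) *v u)
     = (u v* rowIAB A B) \<bullet> (Nc c X U V E D11 *v (u v* rowIAB A B))"
    by (simp only: matrix_vector_mul_assoc[symmetric] inner_mulv transpose_matrix_vector)
  also have "u v* rowIAB A B = vjoin u (vjoin (u v* A) (u v* B))"
    by (simp add: rowIAB_def)
  finally show ?thesis
    by (simp add: Nc_form vmul_mmul vector_matrix_mult_diff_rdistrib algebra_simps)
qed

lemma Sigma_iff:
  "(A, B) \<in> Sigma_set c X U V E D11 \<longleftrightarrow>
     (\<forall>u. (norm (u v* (RR X D11 E V - A ** X - B ** U)))\<^sup>2 \<le> c * (u \<bullet> u))"
  by (simp add: Sigma_set_def psd_def quad_rowIAB)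



lemma two_d_quadratic:
  fixes g1 kg g2 h1 kh h2 :: real
  assumes "g1 < 0" "g2 > 0" "h1 \<ge> 0" "h2 \<ge> 0"
  shows "\<exists>s. g1 + s * kg + s\<^sup>2 * g2 = 0 \<and> h1 + s * kh + s\<^sup>2 * h2 \<ge> 0"
proof -
  define D where "D = kg\<^sup>2 - 4 * g1 * g2"
  have D: "D > kg\<^sup>2" using assms by (simp add: D_def mult_neg_pos)
  define r where "r = sqrt D"
  have r2: "r\<^sup>2 = D" using D by (simp add: r_def) (smt (verit) zero_le_power2)
  have rpos: "r > \<bar>kg\<bar>" using D r_def real_sqrt_abs real_sqrt_less_mono by metis
  define s1 where "s1 = (- kg + r) / (2 * g2)"
  define s2 where "s2 = (- kg - r) / (2 * g2)"
  have s1: "s1 > 0" using rpos assms by (simp add: s1_def)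
  have s2: "s2 < 0" using rpos assms by (simp add: s2_def divide_neg_pos)
  have iden: "g1 + s * kg + s\<^sup>2 * g2 = ((2 * g2 * s + kg)\<^sup>2 - D)/(4*g2)" for s
    using assms unfolding D_def by (simp add: field_simps power2_eq_square)
  have e1: "2 * g2 * s1 + kg = r" using assms by (simp add: s1_def)
  have e2: "2 * g2 * s2 + kg = - r" using assms by (simp add: s2_def)
  have p1: "g1 + s1 * kg + s1\<^sup>2 * g2 = 0" by (simp add: iden e1 r2)
  have p2: "g1 + s2 * kg + s2\<^sup>2 * g2 = 0" by (simp add: iden e2 r2)
  have key: "s1 * (h1 + s2 * kh + s2\<^sup>2 * h2) - s2 * (h1 + s1 * kh + s1\<^sup>2 * h2)
      = (s1 - s2) * (h1 - h2 * s1 * s2)"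
    by (simp add: algebra_simps power2_eq_square)
  have "(s1 - s2) * (h1 - h2 * s1 * s2) \<ge> 0"
  proof -
    have "h2 * s1 * s2 \<le> 0" using s1 s2 assms
      by (metis mult_nonneg_nonneg mult_nonneg_nonpos less_eq_real_def)
    then show ?thesis using s1 s2 assms by simp
  qed
  then have "h1 + s1 * kh + s1\<^sup>2 * h2 \<ge> 0 \<or> h1 + s2 * kh + s2\<^sup>2 * h2 \<ge> 0"
    using key s1 s2
    by (smt (verit) mult_pos_neg mult_neg_neg)
  then show ?thesis using p1 p2 by blast
qed


lemma cont_mulv[continuous_intros]:
  "continuous_on S k \<Longrightarrow> continuous_on S (\<lambda>x. (M::real^'a^'b) *v k x)"
  by (rule bounded_linear.continuous_on[OF matrix_vector_mul_bounded_linear])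

lemma slemma:
  fixes Mf Mg :: "real^'k^'k" and Vs :: "(real^'k) set"
  assumes Vs: "subspace Vs"
    and prem: "\<And>z. z \<in> Vs \<Longrightarrow> z \<noteq> 0 \<Longrightarrow> z \<bullet> (Mg *v z) \<ge> 0 \<Longrightarrow> z \<bullet> (Mf *v z) < 0"
  shows "\<exists>t \<beta>. 0 \<le> t \<and> t \<le> 1 \<and> \<beta> > 0 \<and>
           (\<forall>z\<in>Vs. (1 - t) * (z \<bullet> (Mf *v z)) + t * (z \<bullet> (Mg *v z)) \<le> - \<beta> * (z \<bullet> z))"
proof -
  define f where "f z = z \<bullet> (Mf *v z)" for z
  define g where "g z = z \<bullet> (Mg *v z)" for z
  define h where "h t z = (1 - t) * f z + t * g z" for t z
  have exp: "(a + s *\<^sub>R b) \<bullet> (M *v (a + s *\<^sub>R b)) =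
      a \<bullet> (M *v a) + s * (a \<bullet> (M *v b) + b \<bullet> (M *v a)) + s\<^sup>2 * (b \<bullet> (M *v b))"
    for a b :: "real^'k" and s and M :: "real^'k^'k"
    by (simp add: algebra_simps matrix_vector_mult_scaleR inner_add_left inner_add_right power2_eq_square)
  have hom: "(s *\<^sub>R a) \<bullet> (M *v (s *\<^sub>R a)) = s\<^sup>2 * (a \<bullet> (M *v a))"
    for a :: "real^'k" and s and M :: "real^'k^'k"
    by (simp add: matrix_vector_mult_scaleR power2_eq_square)
  have hexp: "\<exists>k. \<forall>s. h t (a + s *\<^sub>R b) = h t a + s * k + s\<^sup>2 * h t b" for t a b
    by (rule exI[of _ "(1 - t) * (a \<bullet> (Mf *v b) + b \<bullet> (Mf *v a)) + t * (a \<bullet> (Mg *v b) + b \<bullet> (Mg *v a))"])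
       (simp add: h_def f_def g_def exp algebra_simps power2_eq_square)
  have gexp: "\<exists>k. \<forall>s. g (a + s *\<^sub>R b) = g a + s * k + s\<^sup>2 * g b" for a b
    by (rule exI[of _ "a \<bullet> (Mg *v b) + b \<bullet> (Mg *v a)"]) (simp add: g_def exp)
  have hhom: "h t (s *\<^sub>R a) = s\<^sup>2 * h t a" for t s a
    by (simp add: h_def f_def g_def hom algebra_simps power2_eq_square)
  have ghom: "g (s *\<^sub>R a) = s\<^sup>2 * g a" for s a
    unfolding g_def by (rule hom)
  have twod: False if t0: "0 \<le> t" "t < 1" and z: "z1 \<in> Vs" "z2 \<in> Vs" and gs: "g z1 < 0" "g z2 > 0"
    and hs: "h t z1 \<ge> 0" "h t z2 \<ge> 0" for t z1 z2
  proof -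
    obtain kg where kg: "\<And>s. g (z1 + s *\<^sub>R z2) = g z1 + s * kg + s\<^sup>2 * g z2" using gexp by blast
    obtain kh where kh: "\<And>s. h t (z1 + s *\<^sub>R z2) = h t z1 + s * kh + s\<^sup>2 * h t z2" using hexp by blast
    obtain s where s: "g z1 + s * kg + s\<^sup>2 * g z2 = 0" "h t z1 + s * kh + s\<^sup>2 * h t z2 \<ge> 0"
      using two_d_quadratic[OF gs(1) gs(2) hs] by blast
    define z where "z = z1 + s *\<^sub>R z2"
    have zV: "z \<in> Vs" using Vs z by (simp add: z_def subspace_add subspace_scale)
    have gz: "g z = 0" using kg s by (simp add: z_def)
    have hz: "h t z \<ge> 0" using kh s by (simp add: z_def)
    have "z \<noteq> 0"
    proof
      assume "z = 0"
      then have "z1 = (- s) *\<^sub>R z2" by (simp add: z_def eq_neg_iff_add_eq_0 add.commute)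
      then have "g z1 = (- s)\<^sup>2 * g z2" by (metis ghom)
      with gs show False by (smt (verit) mult_nonneg_nonneg zero_le_power2)
    qed
    then have "f z < 0" using prem zV gz by (simp add: f_def g_def)
    moreover have "h t z = (1 - t) * f z" using gz by (simp add: h_def)
    ultimately show False using hz t0 by (smt (verit) mult_pos_neg)
  qed
  define K where "K = Vs \<inter> sphere 0 1"
  have cK: "compact K" unfolding K_def
    by (metis Vs closed_subspace compact_Int_closed compact_sphere inf_commute)
  have K0: "z \<in> K \<Longrightarrow> z \<noteq> 0" for z by (auto simp: K_def)
  have KV: "z \<in> K \<Longrightarrow> z \<in> Vs" for z by (auto simp: K_def)
  have contf: "continuous_on S f" for S by (unfold f_def) (intro continuous_intros)
  have contg: "continuous_on S g" for S by (unfold g_def) (intro continuous_intros)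
  have conth: "continuous_on S (\<lambda>p. h (snd p) (fst p))" for S
    unfolding h_def f_def g_def by (intro continuous_intros)
  define Lo where "Lo = {t. \<exists>z. z \<in> K \<and> (z, t) \<in> {p. g (fst p) \<le> 0} \<inter> {p. 0 \<le> f (fst p)} \<inter> {p. 0 \<le> h (snd p) (fst p)}}"
  define Up where "Up = {t. \<exists>z. z \<in> K \<and> (z, t) \<in> {p. 0 \<le> g (fst p)} \<inter> {p. 0 \<le> h (snd p) (fst p)}}"
  have cLo: "closed Lo" unfolding Lo_def
    apply (intro closed_compact_projection cK closed_Int closed_Collect_le)
    using contf contg conth by (auto intro!: continuous_intros continuous_on_compose2[of UNIV _ UNIV fst])
  have cUp: "closed Up" unfolding Up_def
    apply (intro closed_compact_projection cK closed_Int closed_Collect_le)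
    using contf contg conth by (auto intro!: continuous_intros continuous_on_compose2[of UNIV _ UNIV fst])
  have disj: "Lo \<inter> Up \<inter> {0..1} = {}"
  proof (rule ccontr)
    assume "Lo \<inter> Up \<inter> {0..1} \<noteq> {}"
    then obtain t z1 z2 where t: "0 \<le> t" "t \<le> 1" and z1: "z1 \<in> K" "g z1 \<le> 0" "0 \<le> f z1" "0 \<le> h t z1"
      and z2: "z2 \<in> K" "0 \<le> g z2" "0 \<le> h t z2"
      unfolding Lo_def Up_def by auto
    have g1: "g z1 < 0"
    proof (rule ccontr)
      assume "\<not> g z1 < 0"
      then have "g z1 \<ge> 0" by simp
      then have "f z1 < 0" using prem[of z1] K0 KV z1 by (simp add: f_def g_def)
      then show False using z1 by simp
    qed
    have t1: "t < 1"
    proof (rule ccontr)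
      assume "\<not> t < 1"
      then have "t = 1" using t by simp
      then show False using z1 g1 by (simp add: h_def)
    qed
    have g2: "g z2 > 0"
    proof (rule ccontr)
      assume "\<not> g z2 > 0"
      then have "g z2 = 0" using z2 by simp
      then have "f z2 < 0" using prem[of z2] K0 KV z2 by (simp add: f_def g_def)
      moreover have "h t z2 = (1 - t) * f z2" using \<open>g z2 = 0\<close> by (simp add: h_def)
      ultimately show False using z2 t1 by (smt (verit) mult_pos_neg)
    qed
    show False using twod[OF t(1) t1 KV[OF z1(1)] KV[OF z2(1)] g1 g2 z1(4) z2(3)] .
  qed
  obtain t where t: "0 \<le> t" "t \<le> 1" "t \<notin> Lo" "t \<notin> Up"
  proof -
    have "connected {0..1::real}" by simp
    then have nc: "\<not> ({0..1} \<subseteq> Lo \<union> Up \<and> Lo \<inter> {0..1} \<noteq> {} \<and> Up \<inter> {0..1} \<noteq> {})"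
      using disj cLo cUp unfolding connected_closed by blast
    have "\<not> {0..1} \<subseteq> Lo \<union> Up"
    proof
      assume cov: "{0..1} \<subseteq> Lo \<union> Up"
      show False
      proof (cases "Lo \<inter> {0..1} = {}")
        case True
        moreover have "(0::real) \<in> {0..1}" by simp
        ultimately have "0 \<in> Up" using cov by blast
        then obtain z where "z \<in> K" "0 \<le> g z" "0 \<le> f z" unfolding Up_def by (auto simp: h_def)
        then show False using prem[of z] K0 KV by (simp add: f_def g_def)
      next
        case False
        then have "Up \<inter> {0..1} = {}" using nc cov by blast
        moreover have "(1::real) \<in> {0..1}" by simp
        ultimately have "1 \<in> Lo" using cov by blast
        then obtain z where "z \<in> K" "g z \<le> 0" "0 \<le> f z" "0 \<le> g z" unfolding Lo_def by (auto simp: h_def)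
        then show False using prem[of z] K0 KV by (simp add: f_def g_def)
      qed
    qed
    then obtain t0 where "t0 \<in> {0..1}" "t0 \<notin> Lo \<union> Up" by blast
    then show ?thesis using that[of t0] by auto
  qed
  have neg: "h t z < 0" if "z \<in> K" for z
  proof (cases "g z \<ge> 0")
    case True
    then show ?thesis using t(4) that unfolding Up_def by auto
  next
    case False
    show ?thesis
    proof (cases "f z \<ge> 0")
      case True
      then show ?thesis using t(3) that False unfolding Lo_def by auto
    next
      case False2: False
      have "t < 1 \<or> t = 1" using t by auto
      then show ?thesis
      proof
        assume "t < 1"
        then have "(1 - t) * f z < 0" using False2 by (simp add: mult_pos_neg)
        moreover have "t * g z \<le> 0" using t False by (simp add: mult_nonneg_nonpos)
        ultimately show ?thesis by (simp add: h_def)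
      next
        assume "t = 1"
        then show ?thesis using False by (simp add: h_def)
      qed
    qed
  qed
  show ?thesis
  proof (cases "K = {}")
    case True
    have z0all: "z = 0" if "z \<in> Vs" for z
    proof (rule ccontr)
      assume "z \<noteq> 0"
      then have "(1 / norm z) *\<^sub>R z \<in> K" using that Vs by (simp add: K_def subspace_scale)
      then show False using True by simp
    qed
    then have "\<forall>z\<in>Vs. (1 - t) * (z \<bullet> (Mf *v z)) + t * (z \<bullet> (Mg *v z)) \<le> - 1 * (z \<bullet> z)"
    proof (intro ballI)
      fix z assume "z \<in> Vs"
      then have "z = 0" by (rule z0all)
      then show "(1 - t) * (z \<bullet> (Mf *v z)) + t * (z \<bullet> (Mg *v z)) \<le> - 1 * (z \<bullet> z)" by simp
    qed
    then show ?thesis using t zero_less_one by blast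
  next
    case False
    have "continuous_on K (h t)" unfolding h_def
      using contf contg by (auto intro!: continuous_intros)
    then obtain z0 where z0: "z0 \<in> K" "\<And>z. z \<in> K \<Longrightarrow> h t z \<le> h t z0"
      using continuous_attains_sup[OF cK False, of "h t"] by blast
    have hz0: "h t z0 < 0" using neg z0 by simp
    have bound: "h t z \<le> h t z0 * (z \<bullet> z)" if "z \<in> Vs" for z
    proof (cases "z = 0")
      case True
      then show ?thesis by (simp add: h_def f_def g_def)
    next
      case False
      define z' where "z' = (1 / norm z) *\<^sub>R z"
      have "z' \<in> K" using that Vs False by (simp add: K_def z'_def subspace_scale)
      then have "h t z' \<le> h t z0" using z0 by simp
      moreover have "z = norm z *\<^sub>R z'" using False by (simp add: z'_def)
      then have "h t z = (norm z)\<^sup>2 * h t z'" by (metis hhom)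
      ultimately show ?thesis
        by (simp add: power2_norm_eq_inner[symmetric] mult_left_mono mult.commute[of "h t z0"])
    qed
    have "\<forall>z\<in>Vs. (1 - t) * (z \<bullet> (Mf *v z)) + t * (z \<bullet> (Mg *v z)) \<le> - (- h t z0) * (z \<bullet> z)"
      using bound by (simp add: h_def f_def g_def add.commute)
    moreover have "- h t z0 > 0" using hz0 by simp
    ultimately show ?thesis using t by blast
  qed
qed



lemma proj_exists:
  fixes S :: "'a::euclidean_space set"
  assumes "subspace S"
  obtains Pj where "linear Pj" "\<And>u. Pj u \<in> S" "\<And>u s. s \<in> S \<Longrightarrow> (u - Pj u) \<bullet> s = 0"
proof -
  obtain B where B: "B \<subseteq> S" "pairwise orthogonal B" "\<And>x. x \<in> B \<Longrightarrow> norm x = 1"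
    "independent B" "span B = S"
    using orthonormal_basis_subspace[OF assms] by metis
  have fB: "finite B" using B(4) by (rule independent_imp_finite)
  define Pj where "Pj = (\<lambda>u. \<Sum>b\<in>B. (u \<bullet> b) *\<^sub>R b)"
  have lin: "linear Pj"
    unfolding Pj_def linear_iff
    by (simp add: inner_add_left scaleR_add_left sum.distrib scaleR_sum_right)
  have inS: "Pj u \<in> S" for u
    unfolding Pj_def using B(5)[symmetric]
    by (metis (no_types, lifting) span_base span_scale span_sum)
  have orthB: "(u - Pj u) \<bullet> b' = 0" if "b' \<in> B" for u b'
  proof -
    have "Pj u \<bullet> b' = (\<Sum>b\<in>B. (u \<bullet> b) * (b \<bullet> b'))"
      unfolding Pj_def by (simp add: inner_sum_left)
    also have "\<dots> = (u \<bullet> b') * (b' \<bullet> b')"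
      apply (subst sum.mono_neutral_cong_right[OF fB, of "{b'}" _ "\<lambda>b. (u \<bullet> b) * (b \<bullet> b')"])
      using B(2) that unfolding pairwise_def orthogonal_def by (auto simp: inner_commute)
    also have "\<dots> = u \<bullet> b'" using B(3)[OF that] by (simp add: inner_commute power2_norm_eq_inner[symmetric] norm_eq_1 )
    finally show ?thesis by (simp add: inner_diff_left)
  qed
  have "(u - Pj u) \<bullet> s = 0" if "s \<in> S" for u s
    using orthogonal_to_span[of s B "u - Pj u"] that B(5) orthB unfolding orthogonal_def by blast
  then show ?thesis using that lin inS by blast
qed

lemma proj_facts:
  fixes S :: "'a::euclidean_space set"
  assumes S: "subspace S" and lin: "linear Pj" and inS: "\<And>u. Pj u \<in> S"
    and orth: "\<And>u s. s \<in> S \<Longrightarrow> (u - Pj u) \<bullet> s = 0"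
  shows "\<And>s. s \<in> S \<Longrightarrow> Pj s = s"
    and "\<And>u. (norm u)\<^sup>2 = (norm (Pj u))\<^sup>2 + (norm (u - Pj u))\<^sup>2"
proof -
  fix s assume s: "s \<in> S"
  have "s - Pj s \<in> S" using S s inS by (simp add: subspace_diff)
  then have "(s - Pj s) \<bullet> (s - Pj s) = 0" using orth by blast
  then show "Pj s = s" by simp
next
  fix u
  have "(u - Pj u) \<bullet> Pj u = 0" using orth inS by blast
  then show "(norm u)\<^sup>2 = (norm (Pj u))\<^sup>2 + (norm (u - Pj u))\<^sup>2"
    by (simp add: power2_norm_eq_inner inner_diff_left inner_diff_right inner_commute)
qed

definition outer :: "real^'a \<Rightarrow> real^'b \<Rightarrow> real^'b^'a" where
  "outer a b = (\<chi> i j. a $ i * b $ j)"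

lemma vmul_outer[simp]: "u v* outer a b = (u \<bullet> a) *\<^sub>R b"
  apply (simp add: vec_eq_iff outer_def vector_matrix_mult_def inner_vec_def)
  apply (simp add: sum_distrib_left sum_distrib_right mult_ac)
  done
lemma outer_mulv[simp]: "outer a b *v q = (b \<bullet> q) *\<^sub>R a"
  apply (simp add: vec_eq_iff outer_def matrix_vector_mult_def inner_vec_def)
  apply (simp add: sum_distrib_left sum_distrib_right mult_ac)
  done
lemma scaleR_vmul[simp]: "(r *\<^sub>R u) v* M = r *\<^sub>R (u v* (M::real^'a^'b))"
  apply (simp add: vec_eq_iff vector_matrix_mult_def)
  apply (simp add: sum_distrib_left mult_ac)
  done

lemma step1:
  fixes X :: "real^'l^'n" and U :: "real^'l^'m" and V :: "real^'l^'q"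
    and E :: "real^'q^'n" and D11 :: "real^'l^'l"
    and P :: "real^'n^'n" and J :: "real^'n^'m"
  assumes H: "\<And>A B u. (A, B) \<in> Sigma_set c X U V E D11 \<Longrightarrow> u \<noteq> 0 \<Longrightarrow>
                 u \<bullet> (A *v (P *v u)) + u \<bullet> (B *v (J *v u)) < 0"
    and S0: "(A0, B0) \<in> Sigma_set c X U V E D11"
    and ker: "y v* X + z v* U = 0"
  shows "y \<bullet> (P *v x) + z \<bullet> (J *v x) = 0"
proof (cases "x = 0")
  case True then show ?thesis by simp
next
  case False
  define K where "K = (x \<bullet> x) * (y \<bullet> (P *v x) + z \<bullet> (J *v x))"
  have lt: "x \<bullet> (A0 *v (P *v x)) + x \<bullet> (B0 *v (J *v x)) + t * K < 0" for t
  proof -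
    define At where "At = A0 + t *\<^sub>R outer x y"
    define Bt where "Bt = B0 + t *\<^sub>R outer x z"
    have "u v* (RR X D11 E V - At ** X - Bt ** U) = u v* (RR X D11 E V - A0 ** X - B0 ** U)" for u
    proof -
      have "u v* (RR X D11 E V - At ** X - Bt ** U) = u v* (RR X D11 E V - A0 ** X - B0 ** U)
         - (t * (u \<bullet> x)) *\<^sub>R (y v* X + z v* U)"
        by (simp add: At_def Bt_def vmul_mmul vector_matrix_mult_diff_rdistrib vector_matrix_mult_add_rdistrib
            vector_matrix_left_distrib algebra_simps scaleR_add_right)
      then show ?thesis using ker by simp
    qed
    then have "(At, Bt) \<in> Sigma_set c X U V E D11" using S0 by (simp add: Sigma_iff)
    from H[OF this False] show ?thesis
      by (simp add: At_def Bt_def K_def matrix_vector_mult_add_rdistrib inner_add_right algebra_simps)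
  qed
  have "K = 0"
  proof (rule ccontr)
    assume "K \<noteq> 0"
    then have "x \<bullet> (A0 *v (P *v x)) + x \<bullet> (B0 *v (J *v x)) + ((1 - (x \<bullet> (A0 *v (P *v x)) + x \<bullet> (B0 *v (J *v x)))) / K) * K = 1"
      by simp
    with lt show False by (metis zero_less_one not_less_iff_gr_or_eq)
  qed
  then show ?thesis using False by (simp add: K_def)
qed


lemma vmul_linear: "linear (\<lambda>v. v v* (M::real^'a^'b))"
  unfolding linear_iff by (simp add: vector_matrix_left_distrib)

lemma step2:
  fixes X :: "real^'l^'n" and U :: "real^'l^'m" and V :: "real^'l^'q"
    and E :: "real^'q^'n" and D11 :: "real^'l^'l"
    and P :: "real^'n^'n" and J :: "real^'n^'m"
    and x y :: "real^'n" and z :: "real^'m"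
  assumes H: "\<And>A B u. (A, B) \<in> Sigma_set c X U V E D11 \<Longrightarrow> u \<noteq> 0 \<Longrightarrow>
                 u \<bullet> (A *v (P *v u)) + u \<bullet> (B *v (J *v u)) < 0"
    and slater: "\<And>u. u \<noteq> 0 \<Longrightarrow> (norm (u v* (RR X D11 E V - A0 ** X - B0 ** U)))\<^sup>2 < c * (u \<bullet> u)"
    and x: "x \<noteq> 0"
    and feas: "(norm (x v* RR X D11 E V - y v* X - z v* U))\<^sup>2 \<le> c * (x \<bullet> x)"
  shows "y \<bullet> (P *v x) + z \<bullet> (J *v x) < 0"
proof -
  define R where "R = RR X D11 E V"
  define W0 where "W0 = R - A0 ** X - B0 ** U"
  have S0: "(A0, B0) \<in> Sigma_set c X U V E D11"
    unfolding Sigma_iff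
  proof
    fix u :: "real^'n"
    show "(norm (u v* (RR X D11 E V - A0 ** X - B0 ** U)))\<^sup>2 \<le> c * (u \<bullet> u)"
      using slater[of u] by (cases "u = 0") auto
  qed
  define S where "S = {(a::real^'n) v* X + (b::real^'m) v* U | a b. True}"
  have subS: "subspace S"
    unfolding subspace_def S_def
  proof (intro conjI allI ballI impI)
    show "0 \<in> {(a::real^'n) v* X + (b::real^'m) v* U | a b. True}"
      by (rule CollectI, rule exI[of _ 0], rule exI[of _ 0]) simp
  next
    fix p q assume "p \<in> {(a::real^'n) v* X + (b::real^'m) v* U | a b. True}"
      "q \<in> {(a::real^'n) v* X + (b::real^'m) v* U | a b. True}"
    then obtain a1 b1 a2 b2 where "p = a1 v* X + b1 v* U" "q = a2 v* X + b2 v* U" by blast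
    then have "p + q = (a1 + a2) v* X + (b1 + b2) v* U" by (simp add: vector_matrix_left_distrib)
    then show "p + q \<in> {(a::real^'n) v* X + (b::real^'m) v* U | a b. True}" by blast
  next
    fix r :: real and p assume "p \<in> {(a::real^'n) v* X + (b::real^'m) v* U | a b. True}"
    then obtain a1 b1 where "p = a1 v* X + b1 v* U" by blast
    then have "r *\<^sub>R p = (r *\<^sub>R a1) v* X + (r *\<^sub>R b1) v* U" by (simp add: scaleR_add_right)
    then show "r *\<^sub>R p \<in> {(a::real^'n) v* X + (b::real^'m) v* U | a b. True}" by blast
  qed
  have inS_intro: "a v* X + b v* U \<in> S" for a b unfolding S_def by blast
  obtain Pj where lin: "linear Pj" and inS: "\<And>u. Pj u \<in> S"
    and orth: "\<And>u s. s \<in> S \<Longrightarrow> (u - Pj u) \<bullet> s = 0"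
    using proj_exists[OF subS] by blast
  note pf = proj_facts[OF subS lin inS orth]
  define Pp where "Pp = (\<lambda>u. u - Pj u)"
  have Pp_add: "Pp (u + v) = Pp u + Pp v" for u v
    by (simp add: Pp_def linear_add[OF lin])
  have Pp_diff: "Pp (u - v) = Pp u - Pp v" for u v
    by (simp add: Pp_def linear_diff[OF lin])
  have Pp_scale: "Pp (r *\<^sub>R u) = r *\<^sub>R Pp u" for r u
    by (simp add: Pp_def linear_scale[OF lin] scaleR_diff_right)
  have Pp_S: "s \<in> S \<Longrightarrow> Pp s = 0" for s by (simp add: Pp_def pf(1))
  have Pp_orth: "s \<in> S \<Longrightarrow> Pp u \<bullet> s = 0" for u s by (simp add: Pp_def orth)
  have nsplit: "(norm u)\<^sup>2 = (norm (Pj u))\<^sup>2 + (norm (Pp u))\<^sup>2" for u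
    using pf(2)[of u] by (simp add: Pp_def)
  define a where "a = (\<lambda>u::real^'n. Pp (u v* R))"
  have a_add: "a (u + v) = a u + a v" for u v
    by (simp add: a_def vector_matrix_left_distrib Pp_add)
  have a_diff: "a (u - v) = a u - a v" for u v
    by (simp add: a_def vector_matrix_mult_diff_distrib Pp_diff)
  have a_scale: "a (r *\<^sub>R u) = r *\<^sub>R a u" for r u
    by (simp add: a_def Pp_scale)
  have aW: "a u = Pp (u v* W0)" for u
  proof -
    have "u v* R = u v* W0 + ((u v* A0) v* X + (u v* B0) v* U)"
      by (simp add: W0_def vmul_mmul vector_matrix_mult_diff_rdistrib)
    then show ?thesis unfolding a_def by (metis Pp_add Pp_S[OF inS_intro] add.right_neutral)
  qed
  define Cf where "Cf = (\<lambda>p q. c * (p \<bullet> q) - a p \<bullet> a q)"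
  have Cpos: "Cf u u > 0" if "u \<noteq> 0" for u
  proof -
    have "(norm (a u))\<^sup>2 \<le> (norm (u v* W0))\<^sup>2" using nsplit[of "u v* W0"] aW[of u] by simp
    also have "\<dots> < c * (u \<bullet> u)" using slater[OF that] by (simp add: W0_def R_def)
    finally show ?thesis by (simp add: Cf_def power2_norm_eq_inner)
  qed
  have a0: "a 0 = 0" using a_scale[of 0 0] by simp
  have Cnn: "Cf u u \<ge> 0" for u
    using Cpos[of u] by (cases "u = 0") (auto simp: Cf_def a0)
  define \<rho> where "\<rho> = x v* R - y v* X - z v* U"
  define s where "s = Pj \<rho>"
  define \<kappa> where "\<kappa> = Cf x x"
  have kpos: "\<kappa> > 0" using Cpos[OF x] by (simp add: \<kappa>_def)
  have Pp\<rho>: "Pp \<rho> = a x"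
  proof -
    have "\<rho> = x v* R - (y v* X + z v* U)" by (simp add: \<rho>_def)
    then show ?thesis by (simp add: a_def Pp_diff Pp_S[OF inS_intro])
  qed
  have s_bound: "(norm s)\<^sup>2 \<le> \<kappa>"
  proof -
    have "(norm \<rho>)\<^sup>2 = (norm s)\<^sup>2 + (norm (a x))\<^sup>2" using nsplit[of \<rho>] Pp\<rho> by (simp add: s_def)
    moreover have "(norm \<rho>)\<^sup>2 \<le> c * (x \<bullet> x)" using feas by (simp add: \<rho>_def R_def)
    ultimately show ?thesis by (simp add: \<kappa>_def Cf_def power2_norm_eq_inner)
  qed
  have sS: "s \<in> S" by (simp add: s_def inS)
  define d where "d = (\<lambda>u::real^'n. Pj (u v* R) - (Cf x u / \<kappa>) *\<^sub>R s)"
  have dS: "d u \<in> S" for u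
    unfolding d_def using subS inS sS by (simp add: subspace_diff subspace_scale)
  have Cf_add: "Cf x (u + v) = Cf x u + Cf x v" for u v
    by (simp add: Cf_def a_add inner_add_right algebra_simps)
  have Cf_scale: "Cf x (r *\<^sub>R u) = r * Cf x u" for r u
    by (simp add: Cf_def a_scale algebra_simps)
  have d_add: "d (u + v) = d u + d v" for u v
  proof -
    have "(Cf x (u + v) / \<kappa>) *\<^sub>R s = (Cf x u / \<kappa>) *\<^sub>R s + (Cf x v / \<kappa>) *\<^sub>R s"
      by (simp add: Cf_add add_divide_distrib scaleR_add_left)
    then show ?thesis
      by (simp add: d_def vector_matrix_left_distrib linear_add[OF lin])
  qed
  have d_scale: "d (r *\<^sub>R u) = r *\<^sub>R d u" for r u
    by (simp add: d_def linear_scale[OF lin] Cf_scale scaleR_diff_right)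
  have d_lin: "linear d"
    unfolding linear_iff using d_add d_scale by blast
  have "\<forall>i. \<exists>p. fst p v* X + snd p v* U = d (axis i 1)"
  proof
    fix i
    obtain p q where "d (axis i 1) = p v* X + q v* U" using dS[of "axis i 1"] unfolding S_def by blast
    then show "\<exists>p. fst p v* X + snd p v* U = d (axis i 1)" by (intro exI[of _ "(p, q)"]) simp
  qed
  then obtain ab where ab: "\<And>i. fst (ab i) v* X + snd (ab i) v* U = d (axis i 1)" by metis
  define A where "A = (\<chi> i. fst (ab i))"
  define B where "B = (\<chi> i. snd (ab i))"
  have vA: "u v* A = (\<Sum>i\<in>UNIV. u $ i *\<^sub>R fst (ab i))" for u
    by (simp add: vec_eq_iff A_def vector_matrix_mult_def sum_component mult.commute)
  have vB: "u v* B = (\<Sum>i\<in>UNIV. u $ i *\<^sub>R snd (ab i))" for u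
    by (simp add: vec_eq_iff B_def vector_matrix_mult_def sum_component mult.commute)
  have ABd: "(u v* A) v* X + (u v* B) v* U = d u" for u
  proof -
    have "(u v* A) v* X + (u v* B) v* U = (\<Sum>i\<in>UNIV. u $ i *\<^sub>R (fst (ab i) v* X + snd (ab i) v* U))"
      by (simp add: vA vB linear_sum[OF vmul_linear] scaleR_add_right sum.distrib)
    also have "\<dots> = (\<Sum>i\<in>UNIV. u $ i *\<^sub>R d (axis i 1))" by (simp add: ab)
    also have "\<dots> = d (\<Sum>i\<in>UNIV. u $ i *\<^sub>R axis i 1)"
      by (simp add: linear_sum[OF d_lin] linear_scale[OF d_lin])
    also have "(\<Sum>i\<in>UNIV. u $ i *\<^sub>R axis i 1) = u"
      using basis_expansion[of u] by (simp add: scalar_mult_eq_scaleR)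
    finally show ?thesis .
  qed
  have CS: "(Cf x u)\<^sup>2 \<le> \<kappa> * Cf u u" for u
  proof -
    define \<tau> where "\<tau> = Cf x u / \<kappa>"
    have "Cf (u - \<tau> *\<^sub>R x) (u - \<tau> *\<^sub>R x) = Cf u u - 2 * \<tau> * Cf x u + \<tau>\<^sup>2 * \<kappa>"
      by (simp add: Cf_def \<kappa>_def a_diff a_scale inner_diff_left inner_diff_right algebra_simps
          power2_eq_square inner_commute)
    also have "\<dots> = Cf u u - (Cf x u)\<^sup>2 / \<kappa>"
      using kpos by (simp add: \<tau>_def field_simps power2_eq_square)
    finally have "0 \<le> Cf u u - (Cf x u)\<^sup>2 / \<kappa>" using Cnn by metis
    then show ?thesis using kpos by (simp add: field_simps)
  qed
  have inSig: "(A, B) \<in> Sigma_set c X U V E D11"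
    unfolding Sigma_iff
  proof
    fix u :: "real^'n"
    define \<mu> where "\<mu> = Cf x u / \<kappa>"
    have "u v* (RR X D11 E V - A ** X - B ** U) = u v* R - ((u v* A) v* X + (u v* B) v* U)"
      by (simp add: R_def vmul_mmul vector_matrix_mult_diff_rdistrib)
    also have "\<dots> = a u + \<mu> *\<^sub>R s"
      by (simp add: ABd d_def a_def Pp_def \<mu>_def)
    finally have eq: "u v* (RR X D11 E V - A ** X - B ** U) = a u + \<mu> *\<^sub>R s" .
    have "a u \<bullet> s = 0" by (simp add: a_def Pp_orth sS)
    then have "(norm (a u + \<mu> *\<^sub>R s))\<^sup>2 = (norm (a u))\<^sup>2 + \<mu>\<^sup>2 * (norm s)\<^sup>2"
      unfolding power2_norm_eq_inner by (simp add: inner_add_left inner_add_right inner_commute power2_eq_square)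
    also have "\<dots> \<le> (norm (a u))\<^sup>2 + \<mu>\<^sup>2 * \<kappa>"
      using s_bound by (simp add: mult_left_mono)
    also have "\<mu>\<^sup>2 * \<kappa> = (Cf x u)\<^sup>2 / \<kappa>" using kpos by (simp add: \<mu>_def power2_eq_square)
    also have "(Cf x u)\<^sup>2 / \<kappa> \<le> Cf u u" using CS[of u] kpos by (simp add: field_simps)
    finally show "(norm (u v* (RR X D11 E V - A ** X - B ** U)))\<^sup>2 \<le> c * (u \<bullet> u)"
      using eq by (simp add: Cf_def power2_norm_eq_inner)
  qed
  have neg: "(x v* A) \<bullet> (P *v x) + (x v* B) \<bullet> (J *v x) < 0"
    using H[OF inSig x] by (simp add: inner_mulv)
  have dx: "d x = y v* X + z v* U"
  proof -
    have "d x = Pj (x v* R) - Pj \<rho>" using kpos by (simp add: d_def \<kappa>_def s_def)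
    also have "\<dots> = Pj (y v* X + z v* U)"
      by (simp add: linear_diff[OF lin, symmetric] \<rho>_def)
    also have "\<dots> = y v* X + z v* U" using inS_intro by (simp add: pf(1))
    finally show ?thesis .
  qed
  have "(x v* A - y) v* X + (x v* B - z) v* U = 0"
    using ABd[of x] dx by (simp add: vector_matrix_mult_diff_distrib algebra_simps)
  from step1[OF H S0 this, of x]
  have "(x v* A - y) \<bullet> (P *v x) + (x v* B - z) \<bullet> (J *v x) = 0" .
  with neg show ?thesis by (simp add: inner_diff_left)
qed



lemma pd_inv:
  fixes P :: "real^'n^'n"
  assumes sym: "transpose P = P" and pd: "pd P"
  shows "P ** matrix_inv P = mat 1" "matrix_inv P ** P = mat 1"
    "transpose (matrix_inv P) = matrix_inv P" "pd (matrix_inv P)"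
proof -
  have "\<forall>x. P *v x = 0 \<longrightarrow> x = 0"
  proof (intro allI impI)
    fix x assume "P *v x = 0"
    then have "x \<bullet> (P *v x) = 0" by simp
    then show "x = 0" using pd unfolding pd_def by (metis less_irrefl)
  qed
  then have "invertible P" using matrix_left_invertible_ker invertible_left_inverse by blast
  then have ex: "\<exists>A'. P ** A' = mat 1 \<and> A' ** P = mat 1" unfolding invertible_def .
  have inv: "P ** matrix_inv P = mat 1 \<and> matrix_inv P ** P = mat 1"
    unfolding matrix_inv_def using someI_ex[OF ex] .
  then show 1: "P ** matrix_inv P = mat 1" and 2: "matrix_inv P ** P = mat 1" by auto
  define Q where "Q = matrix_inv P"
  have "transpose Q = transpose Q ** (P ** Q)" using 1 by (simp add: Q_def)
  also have "\<dots> = transpose (P ** Q) ** Q"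
    by (simp add: matrix_mul_assoc matrix_transpose_mul sym)
  also have "\<dots> = Q" using 1 by (simp add: Q_def)
  finally show "transpose (matrix_inv P) = matrix_inv P" by (simp add: Q_def)
  show "pd (matrix_inv P)"
    unfolding pd_def
  proof (intro allI impI)
    fix u :: "real^'n" assume u: "u \<noteq> 0"
    define x where "x = Q *v u"
    have Px: "P *v x = u" using 1 by (simp add: x_def Q_def matrix_vector_mul_assoc)
    then have "x \<noteq> 0" using u by auto
    then have "0 < x \<bullet> (P *v x)" using pd unfolding pd_def by blast
    also have "x \<bullet> (P *v x) = u \<bullet> (matrix_inv P *v u)"
      by (metis Px inner_commute x_def Q_def)
    finally show "0 < u \<bullet> (matrix_inv P *v u)" .
  qed
qed

lemma nd_iff: "nd M \<longleftrightarrow> (\<forall>x. x \<noteq> 0 \<longrightarrow> x \<bullet> (M *v x) < 0)"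
  by (simp add: nd_def pd_def)

lemma inner_vmul: "(x::real^'n) \<bullet> (v v* M) = v \<bullet> (M *v x)"
  by (metis inner_mulv inner_commute)

lemma quad_cl:
  fixes Q Acl :: "real^'n^'n"
  assumes "transpose Q = Q"
  shows "x \<bullet> ((transpose Acl ** Q + Q ** Acl) *v x) = 2 * ((Q *v x) \<bullet> (Acl *v x))"
proof -
  have q: "x v* Q = Q *v x" by (metis assms transpose_matrix_vector)
  have "x \<bullet> ((transpose Acl ** Q + Q ** Acl) *v x)
      = x \<bullet> (transpose Acl *v (Q *v x)) + x \<bullet> (Q *v (Acl *v x))"
    by (simp add: matrix_vector_mult_add_rdistrib inner_add_right matrix_vector_mul_assoc[symmetric]
        del: transpose_matrix_vector)
  also have "x \<bullet> (transpose Acl *v (Q *v x)) = (Q *v x) \<bullet> (Acl *v x)"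
    by (simp only: transpose_matrix_vector inner_vmul)
  also have "x \<bullet> (Q *v (Acl *v x)) = (Q *v x) \<bullet> (Acl *v x)"
    by (simp add: inner_mulv q)
  finally show ?thesis by simp
qed

lemma w_decomp: "w = vjoin (pl w) (vjoin (pl (pr w)) (pr (pr w)))"
  by (simp add: vjoin_pl_pr)

lemma suff:
  fixes X :: "real^'l^'n" and U :: "real^'l^'m" and V :: "real^'l^'q"
    and E :: "real^'q^'n" and D11 :: "real^'l^'l"
    and P :: "real^'n^'n" and J :: "real^'n^'m"
  assumes a: "\<alpha> \<ge> 0" and b: "\<beta> > 0" and sym: "transpose P = P" and pd: "pd P"
    and lmi: "psd (LMI \<alpha> \<beta> P J (Nc c X U V E D11))"
    and AB: "(A, B) \<in> Sigma_set c X U V E D11"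
  shows "nd (transpose (A + B ** (J ** matrix_inv P)) ** matrix_inv P
                  + matrix_inv P ** (A + B ** (J ** matrix_inv P)))"
proof -
  define Q where "Q = matrix_inv P"
  note inv = pd_inv[OF sym pd]
  have key: "u \<bullet> (A *v (P *v u)) + u \<bullet> (B *v (J *v u)) < 0" if u: "u \<noteq> 0" for u
  proof -
    define w where "w = vjoin u (vjoin (u v* A) (u v* B))"
    have "0 \<le> w \<bullet> (LMI \<alpha> \<beta> P J (Nc c X U V E D11) *v w)" using lmi by (simp add: psd_def)
    also have "\<dots> = - \<beta> * (u \<bullet> u) - 2 * ((u v* A) \<bullet> (P *v u)) - 2 * ((u v* B) \<bullet> (J *v u))
        - \<alpha> * (c * (u \<bullet> u) - (norm (u v* (RR X D11 E V - A ** X - B ** U)))\<^sup>2)"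
      unfolding w_def LMI_form[OF sym] Nc_form
      by (simp add: vmul_mmul vector_matrix_mult_diff_rdistrib algebra_simps)
    finally have 1: "0 \<le> - \<beta> * (u \<bullet> u) - 2 * ((u v* A) \<bullet> (P *v u)) - 2 * ((u v* B) \<bullet> (J *v u))
        - \<alpha> * (c * (u \<bullet> u) - (norm (u v* (RR X D11 E V - A ** X - B ** U)))\<^sup>2)" .
    have "0 \<le> c * (u \<bullet> u) - (norm (u v* (RR X D11 E V - A ** X - B ** U)))\<^sup>2"
      using AB by (simp add: Sigma_iff)
    then have 2: "0 \<le> \<alpha> * (c * (u \<bullet> u) - (norm (u v* (RR X D11 E V - A ** X - B ** U)))\<^sup>2)"
      using a by simp
    have 3: "\<beta> * (u \<bullet> u) > 0" using b u by simp
    from 1 2 3 have "(u v* A) \<bullet> (P *v u) + (u v* B) \<bullet> (J *v u) < 0" by linarith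
    then show ?thesis by (simp add: inner_mulv)
  qed
  show ?thesis
    unfolding nd_iff
  proof (intro allI impI)
    fix x :: "real^'n" assume x: "x \<noteq> 0"
    define u where "u = Q *v x"
    have Pu: "P *v u = x" using inv(1) by (simp add: u_def Q_def matrix_vector_mul_assoc)
    then have u0: "u \<noteq> 0" using x by auto
    have Ju: "(J ** Q) *v x = J *v u" by (simp add: u_def matrix_vector_mul_assoc)
    have "x \<bullet> ((transpose (A + B ** (J ** Q)) ** Q + Q ** (A + B ** (J ** Q))) *v x)
        = 2 * (u \<bullet> ((A + B ** (J ** Q)) *v x))"
      using quad_cl[OF inv(3)[folded Q_def]] by (simp add: u_def)
    also have "(A + B ** (J ** Q)) *v x = A *v (P *v u) + B *v (J *v u)"
    proof -
      have "A *v (P *v u) = A *v x" by (simp add: Pu)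
      moreover have "B *v (J *v u) = (B ** (J ** Q)) *v x" by (simp add: u_def matrix_vector_mul_assoc)
      ultimately show ?thesis by (simp add: matrix_vector_mult_add_rdistrib)
    qed
    finally show "x \<bullet> ((transpose (A + B ** (J ** matrix_inv P)) ** matrix_inv P
                  + matrix_inv P ** (A + B ** (J ** matrix_inv P))) *v x) < 0"
      using key[OF u0] by (simp add: Q_def inner_add_right)
  qed
qed


theorem theorem6:
  fixes c :: real
    and X :: "real^'l^'n" and U :: "real^'l^'m" and V :: "real^'l^'q"
    and E :: "real^'q^'n" and D11 :: "real^'l^'l"
    and Abar :: "real^'n^'n" and Bbar :: "real^'m^'n"
  assumes "c > 0"
    and "pd (rowIAB Abar Bbar ** Nc c X U V E D11 ** transpose (rowIAB Abar Bbar))"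
  shows "(informative_qs (Sigma_set c X U V E D11) \<longleftrightarrow>
           (\<exists>\<alpha> \<beta> (P :: real^'n^'n) (J :: real^'n^'m).
              \<alpha> \<ge> 0 \<and> \<beta> > 0 \<and> transpose P = P \<and> pd P \<and>
              psd (LMI \<alpha> \<beta> P J (Nc c X U V E D11))))
     \<and> (\<forall>\<alpha> \<beta> (P :: real^'n^'n) (J :: real^'n^'m).
           \<alpha> \<ge> 0 \<and> \<beta> > 0 \<and> transpose P = P \<and> pd P \<and>
           psd (LMI \<alpha> \<beta> P J (Nc c X U V E D11)) \<longrightarrow>
           (\<forall>(A, B) \<in> Sigma_set c X U V E D11.
              nd (transpose (A + B ** (J ** matrix_inv P)) ** matrix_inv P
                  + matrix_inv P ** (A + B ** (J ** matrix_inv P)))))"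
proof -
  let ?S = "Sigma_set c X U V E D11"
  let ?N = "Nc c X U V E D11"
  define R where "R = RR X D11 E V"
  have slater: "(norm (u v* (RR X D11 E V - Abar ** X - Bbar ** U)))\<^sup>2 < c * (u \<bullet> u)"
    if "u \<noteq> 0" for u
    using assms(2) that unfolding pd_def quad_rowIAB by auto
  have S0: "(Abar, Bbar) \<in> ?S"
    unfolding Sigma_iff
  proof
    fix u :: "real^'n"
    show "(norm (u v* (RR X D11 E V - Abar ** X - Bbar ** U)))\<^sup>2 \<le> c * (u \<bullet> u)"
      using slater[of u] by (cases "u = 0") auto
  qed
  have part2: "\<forall>\<alpha> \<beta> (P :: real^'n^'n) (J :: real^'n^'m).
           \<alpha> \<ge> 0 \<and> \<beta> > 0 \<and> transpose P = P \<and> pd P \<and>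
           psd (LMI \<alpha> \<beta> P J (Nc c X U V E D11)) \<longrightarrow>
           (\<forall>(A, B) \<in> Sigma_set c X U V E D11.
              nd (transpose (A + B ** (J ** matrix_inv P)) ** matrix_inv P
                  + matrix_inv P ** (A + B ** (J ** matrix_inv P))))"
  proof (intro allI impI ballI)
    fix \<alpha> \<beta> and P :: "real^'n^'n" and J :: "real^'n^'m" and AB
    assume h: "\<alpha> \<ge> 0 \<and> \<beta> > 0 \<and> transpose P = P \<and> pd P \<and> psd (LMI \<alpha> \<beta> P J (Nc c X U V E D11))"
      and ab: "AB \<in> ?S"
    obtain A B where AB: "AB = (A, B)" by (cases AB)
    show "case AB of (A, B) \<Rightarrow> nd (transpose (A + B ** (J ** matrix_inv P)) ** matrix_inv P
                  + matrix_inv P ** (A + B ** (J ** matrix_inv P)))"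
    proof -
      have "nd (transpose (A + B ** (J ** matrix_inv P)) ** matrix_inv P
                  + matrix_inv P ** (A + B ** (J ** matrix_inv P)))"
        using ab[unfolded AB] h by (intro suff) auto
      then show ?thesis by (simp add: AB)
    qed
  qed
  have part1: "informative_qs ?S \<longleftrightarrow>
           (\<exists>\<alpha> \<beta> (P :: real^'n^'n) (J :: real^'n^'m).
              \<alpha> \<ge> 0 \<and> \<beta> > 0 \<and> transpose P = P \<and> pd P \<and>
              psd (LMI \<alpha> \<beta> P J (Nc c X U V E D11)))"
  proof
    assume "\<exists>\<alpha> \<beta> (P :: real^'n^'n) (J :: real^'n^'m).
              \<alpha> \<ge> 0 \<and> \<beta> > 0 \<and> transpose P = P \<and> pd P \<and>
              psd (LMI \<alpha> \<beta> P J (Nc c X U V E D11))"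
    then obtain \<alpha> \<beta> and P :: "real^'n^'n" and J :: "real^'n^'m" where
      h: "\<alpha> \<ge> 0 \<and> \<beta> > 0 \<and> transpose P = P \<and> pd P \<and> psd (LMI \<alpha> \<beta> P J (Nc c X U V E D11))"
      by blast
    note inv = pd_inv[of P]
    have "transpose (matrix_inv P) = matrix_inv P \<and> pd (matrix_inv P) \<and>
       (\<forall>(A, B) \<in> ?S. nd (transpose (A + B ** (J ** matrix_inv P)) ** matrix_inv P
                  + matrix_inv P ** (A + B ** (J ** matrix_inv P))))"
      using inv h part2 by blast
    then show "informative_qs ?S" unfolding informative_qs_def by blast
  next
    assume "informative_qs ?S"
    then obtain K :: "real^'n^'m" and Q :: "real^'n^'n" where KQ: "transpose Q = Q" "pd Q"
      "\<forall>(A, B) \<in> ?S. nd (transpose (A + B ** K) ** Q + Q ** (A + B ** K))"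
      unfolding informative_qs_def by blast
    note invQ = pd_inv[OF KQ(1) KQ(2)]
    define P where "P = matrix_inv Q"
    define J where "J = K ** P"
    have Psym: "transpose P = P" and Ppd: "pd P" using invQ by (simp_all add: P_def)
    have H: "u \<bullet> (A *v (P *v u)) + u \<bullet> (B *v (J *v u)) < 0"
      if AB: "(A, B) \<in> ?S" and u: "u \<noteq> 0" for A B u
    proof -
      define x where "x = P *v u"
      have Qx: "Q *v x = u" using invQ(1) by (simp add: x_def P_def matrix_vector_mul_assoc)
      then have x0: "x \<noteq> 0" using u by auto
      have "nd (transpose (A + B ** K) ** Q + Q ** (A + B ** K))" using KQ(3) AB by auto
      then have "x \<bullet> ((transpose (A + B ** K) ** Q + Q ** (A + B ** K)) *v x) < 0"
        using x0 unfolding nd_iff by blast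
      then have "2 * (u \<bullet> ((A + B ** K) *v x)) < 0"
        using quad_cl[OF KQ(1), of x "A + B ** K"] Qx by simp
      moreover have "(A + B ** K) *v x = A *v (P *v u) + B *v (J *v u)"
        by (simp add: x_def J_def matrix_vector_mult_add_rdistrib matrix_vector_mul_assoc[symmetric])
      ultimately show ?thesis by (simp add: inner_add_right)
    qed
    define Mf where "Mf = - LMI 0 0 P J ?N"
    have fgen: "w \<bullet> (Mf *v w) = 2 * (pl (pr w) \<bullet> (P *v pl w) + pr (pr w) \<bullet> (J *v pl w))" for w
    proof -
      have "vjoin (pl w) (vjoin (pl (pr w)) (pr (pr w))) \<bullet> (Mf *v vjoin (pl w) (vjoin (pl (pr w)) (pr (pr w))))
          = 2 * (pl (pr w) \<bullet> (P *v pl w) + pr (pr w) \<bullet> (J *v pl w))"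
        by (simp add: Mf_def LMI_form[OF Psym])
      then show ?thesis by (simp only: w_decomp[symmetric])
    qed
    have ggen: "w \<bullet> (?N *v w) = c * (pl w \<bullet> pl w) - (norm (pl w v* R - pl (pr w) v* X - pr (pr w) v* U))\<^sup>2" for w
    proof -
      have "vjoin (pl w) (vjoin (pl (pr w)) (pr (pr w))) \<bullet> (?N *v vjoin (pl w) (vjoin (pl (pr w)) (pr (pr w))))
          = c * (pl w \<bullet> pl w) - (norm (pl w v* R - pl (pr w) v* X - pr (pr w) v* U))\<^sup>2"
        by (simp add: Nc_form R_def)
      then show ?thesis by (simp only: w_decomp[symmetric])
    qed
    define N0 where "N0 = {k :: real^('n+('n+'m)). pl k = 0 \<and> pl (pr k) v* X + pr (pr k) v* U = 0}"
    have subN0: "subspace N0"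
      unfolding subspace_def N0_def
      by (auto simp: vector_matrix_left_distrib algebra_simps scaleR_add_right[symmetric])
    define Vs where "Vs = {w. \<forall>k\<in>N0. w \<bullet> k = 0}"
    have subVs: "subspace Vs"
      unfolding subspace_def Vs_def by (auto simp: inner_add_left)
    have finv: "(w + k) \<bullet> (Mf *v (w + k)) = w \<bullet> (Mf *v w)" if k: "k \<in> N0" for w k
    proof -
      have k1: "pl k = 0" and k2: "pl (pr k) v* X + pr (pr k) v* U = 0" using k by (auto simp: N0_def)
      have "pl (pr k) \<bullet> (P *v pl w) + pr (pr k) \<bullet> (J *v pl w) = 0"
        by (rule step1[OF H S0 k2])
      then show ?thesis unfolding fgen by (simp add: k1 inner_add_left algebra_simps)
    qed
    have ginv: "(w + k) \<bullet> (?N *v (w + k)) = w \<bullet> (?N *v w)" if k: "k \<in> N0" for w k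
    proof -
      have k1: "pl k = 0" and k2: "pl (pr k) v* X + pr (pr k) v* U = 0" using k by (auto simp: N0_def)
      have "pl (w + k) v* R - pl (pr (w + k)) v* X - pr (pr (w + k)) v* U
          = pl w v* R - pl (pr w) v* X - pr (pr w) v* U - (pl (pr k) v* X + pr (pr k) v* U)"
        by (simp add: k1 vector_matrix_left_distrib algebra_simps)
      then have e: "pl (w + k) v* R - pl (pr (w + k)) v* X - pr (pr (w + k)) v* U
          = pl w v* R - pl (pr w) v* X - pr (pr w) v* U" by (simp only: k2 diff_zero)
      show ?thesis unfolding ggen e by (simp add: k1)
    qed
    have prem: "w \<bullet> (Mf *v w) < 0" if w: "w \<in> Vs" "w \<noteq> 0" and gw: "w \<bullet> (?N *v w) \<ge> 0" for w
    proof (cases "pl w = 0")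
      case True
      have e: "pl w v* R - pl (pr w) v* X - pr (pr w) v* U = - (pl (pr w) v* X + pr (pr w) v* U)"
        unfolding True by (simp only: vector_matrix_mult_0 diff_0 minus_add_distrib diff_conv_add_uminus add_0_left)
      have h0: "0 \<le> c * (pl w \<bullet> pl w) - (norm (- (pl (pr w) v* X + pr (pr w) v* U)))\<^sup>2"
        using gw unfolding ggen e .
      have "(norm (pl (pr w) v* X + pr (pr w) v* U))\<^sup>2 \<le> 0"
        using h0 unfolding True norm_minus_cancel inner_zero_left mult_zero_right by linarith
      then have "pl (pr w) v* X + pr (pr w) v* U = 0"
        by (metis norm_eq_zero order_antisym power_eq_0_iff zero_le_power2)
      then have "w \<in> N0" using True by (simp add: N0_def)
      then have "w \<bullet> w = 0" using w(1) by (simp add: Vs_def)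
      then show ?thesis using w(2) by simp
    next
      case False
      have feas: "(norm (pl w v* RR X D11 E V - pl (pr w) v* X - pr (pr w) v* U))\<^sup>2 \<le> c * (pl w \<bullet> pl w)"
        using gw by (simp add: ggen R_def)
      show ?thesis using step2[OF H slater False feas] by (simp add: fgen)
    qed
    obtain t \<beta> where t: "0 \<le> t" "t \<le> 1" "\<beta> > 0"
      and sl: "\<forall>z\<in>Vs. (1 - t) * (z \<bullet> (Mf *v z)) + t * (z \<bullet> (?N *v z)) \<le> - \<beta> * (z \<bullet> z)"
      using slemma[OF subVs prem] by blast
    obtain Pj0 where lin0: "linear Pj0" and inN0: "\<And>u. Pj0 u \<in> N0"
      and orth0: "\<And>u s. s \<in> N0 \<Longrightarrow> (u - Pj0 u) \<bullet> s = 0"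
      using proj_exists[OF subN0] by blast
    have bound: "(1 - t) * (w \<bullet> (Mf *v w)) + t * (w \<bullet> (?N *v w)) \<le> - \<beta> * (pl w \<bullet> pl w)" for w
    proof -
      define k where "k = Pj0 w"
      define w1 where "w1 = w - k"
      have kN: "k \<in> N0" by (simp add: k_def inN0)
      have w1V: "w1 \<in> Vs" using orth0 by (simp add: Vs_def w1_def k_def)
      have w: "w = w1 + k" by (simp add: w1_def)
      have "(1 - t) * (w \<bullet> (Mf *v w)) + t * (w \<bullet> (?N *v w))
          = (1 - t) * (w1 \<bullet> (Mf *v w1)) + t * (w1 \<bullet> (?N *v w1))"
        using finv[OF kN, of w1] ginv[OF kN, of w1] w by simp
      also have "\<dots> \<le> - \<beta> * (w1 \<bullet> w1)" using sl w1V by blast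
      also have "\<dots> \<le> - \<beta> * (pl w1 \<bullet> pl w1)"
        using t(3) by (simp add: inner_split[of w1 w1])
      also have "pl w1 = pl w" using kN by (simp add: w1_def N0_def)
      finally show ?thesis .
    qed
    have t1: "t < 1"
    proof (rule ccontr)
      assume "\<not> t < 1"
      then have t1: "t = 1" using t by simp
      define u0 :: "real^'n" where "u0 = axis undefined 1"
      have u0: "u0 \<noteq> 0" by (simp add: u0_def)
      define w0 where "w0 = vjoin u0 (vjoin (u0 v* Abar) (u0 v* Bbar))"
      have "w0 \<bullet> (?N *v w0) = c * (u0 \<bullet> u0) - (norm (u0 v* (RR X D11 E V - Abar ** X - Bbar ** U)))\<^sup>2"
        by (simp add: w0_def Nc_form vmul_mmul vector_matrix_mult_diff_rdistrib algebra_simps)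
      then have "w0 \<bullet> (?N *v w0) > 0" using slater[OF u0] by simp
      moreover have "w0 \<bullet> (?N *v w0) \<le> - \<beta> * (u0 \<bullet> u0)" using bound[of w0] t1 by (simp add: w0_def)
      moreover have "\<beta> * (u0 \<bullet> u0) > 0" using t(3) u0 by simp
      ultimately show False by simp
    qed
    define \<alpha> where "\<alpha> = t / (1 - t)"
    define \<beta>' where "\<beta>' = \<beta> / (1 - t)"
    have a0: "\<alpha> \<ge> 0" using t t1 by (simp add: \<alpha>_def)
    have b0: "\<beta>' > 0" using t t1 by (simp add: \<beta>'_def)
    have "psd (LMI \<alpha> \<beta>' P J ?N)"
      unfolding psd_def
    proof
      fix w :: "real^('n+('n+'m))"
      define F where "F = w \<bullet> (Mf *v w)"
      define G where "G = w \<bullet> (?N *v w)"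
      define X0 where "X0 = pl w \<bullet> pl w"
      have bd: "(1 - t) * F + t * G \<le> - \<beta> * X0" using bound[of w] by (simp add: F_def G_def X0_def)
      have "w \<bullet> (LMI \<alpha> \<beta>' P J ?N *v w) = - \<beta>' * X0 - F - \<alpha> * G"
      proof -
        have "vjoin (pl w) (vjoin (pl (pr w)) (pr (pr w))) \<bullet> (LMI \<alpha> \<beta>' P J ?N *v vjoin (pl w) (vjoin (pl (pr w)) (pr (pr w))))
          = - \<beta>' * X0 - F - \<alpha> * G"
          unfolding LMI_form[OF Psym]
          by (simp only: w_decomp[symmetric]) (simp add: F_def G_def X0_def fgen algebra_simps)
        then show ?thesis by (simp only: w_decomp[symmetric])
      qed
      moreover have "(1 - t) * (- \<beta>' * X0 - F - \<alpha> * G) = - \<beta> * X0 - (1 - t) * F - t * G"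
      proof -
        have nz: "1 - t \<noteq> 0" using t1 by simp
        have e1: "(1 - t) * (\<beta> / (1 - t)) = \<beta>" using nz by simp
        have e2: "(1 - t) * (t / (1 - t)) = t" using nz by simp
        have "(1 - t) * (- \<beta>' * X0 - F - \<alpha> * G) = - ((1 - t) * \<beta>') * X0 - (1 - t) * F - ((1 - t) * \<alpha>) * G"
          by (simp add: algebra_simps)
        also have "\<dots> = - \<beta> * X0 - (1 - t) * F - t * G" by (simp only: \<beta>'_def \<alpha>_def e1 e2)
        finally show ?thesis .
      qed
      then have "(1 - t) * (- \<beta>' * X0 - F - \<alpha> * G) \<ge> 0" using bd by simp
      then have "- \<beta>' * X0 - F - \<alpha> * G \<ge> 0" using t1 by (simp add: zero_le_mult_iff)
      ultimately show "0 \<le> w \<bullet> (LMI \<alpha> \<beta>' P J ?N *v w)" by simp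
    qed
    then show "\<exists>\<alpha> \<beta> (P :: real^'n^'n) (J :: real^'n^'m).
              \<alpha> \<ge> 0 \<and> \<beta> > 0 \<and> transpose P = P \<and> pd P \<and>
              psd (LMI \<alpha> \<beta> P J (Nc c X U V E D11))"
      using a0 b0 Psym Ppd by blast
  qed
  show ?thesis using part1 part2 by blast
qed


end
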